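(* Let $(X,d)$ be a complete metric space with $|X|\geqslant 3$ and let $T\colon X\to X$ be continuous and asymptotically regular. Suppose there exist $\alpha\in[0,\frac12)$ and functions $\beta_1,\beta_2,\beta_3\colon[0,\infty)\to[0,\infty)$ with $\limsup_{t\to0}\beta_i(t)<\infty$ for $i=1,2,3$, such that $$d(Tx,Ty)+d(Ty,Tz)+d(Tx,Tz)\leqslant \alpha\big(d(x,y)+d(y,z)+d(x,z)\big)+\beta_1(d(x,Tx))\,d(x,Tx)+\beta_2(d(y,Ty))\,d(y,Ty)+\beta_3(d(z,Tz))\,d(z,Tz)$$ for all pairwise distinct $x,y,z\in X$. Then $T$ has a fixed point, and $T$ has at most two fixed points.
   Context: A mapping $T\colon X\to X$ on a metric space is asymptotically regular if $\lim_{n\to\infty}d(T^{n+1}x,T^nx)=0$ for every $x\in X$. *)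

theory Defs
  imports "HOL-Analysis.Analysis"
begin

definition asymptotically_regular :: "('a::metric_space \<Rightarrow> 'a) \<Rightarrow> bool" where
  "asymptotically_regular T \<longleftrightarrow>
     (\<forall>x. (\<lambda>n. dist ((T ^^ Suc n) x) ((T ^^ n) x)) \<longlonglongrightarrow> 0)"

end

theory Submission
  imports Defs
begin

lemma beta_lim:
  fixes \<beta> :: "real \<Rightarrow> real" and d :: "nat \<Rightarrow> real"
  assumes nn: "\<And>t. t \<ge> 0 \<Longrightarrow> \<beta> t \<ge> 0"
    and ls: "Limsup (at_right 0) (\<lambda>t. ereal (\<beta> t)) < \<infinity>"
    and d0: "d \<longlonglongrightarrow> 0" and dpos: "\<And>n. d n > 0"
  shows "(\<lambda>n. \<beta> (d n) * d n) \<longlonglongrightarrow> 0"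
proof -
  obtain B :: real where B: "Limsup (at_right 0) (\<lambda>t. ereal (\<beta> t)) < ereal B"
    using ls by (cases "Limsup (at_right 0) (\<lambda>t. ereal (\<beta> t))") (auto, metis gt_ex)
  have ev: "eventually (\<lambda>t. \<beta> t < B) (at_right (0::real))"
    using Limsup_lessD[OF B] by simp
  have fl: "filterlim d (at_right 0) sequentially"
    using d0 dpos by (auto simp: filterlim_at intro!: always_eventually) (metis dpos less_irrefl)
  have ev2: "eventually (\<lambda>n. \<beta> (d n) < B) sequentially"
    using eventually_compose_filterlim[OF ev fl] .
  have "(\<lambda>n. B * d n) \<longlonglongrightarrow> B * 0" by (intro tendsto_intros d0)
  then have lim: "(\<lambda>n. B * d n) \<longlonglongrightarrow> 0" by simp
  show ?thesis
  proof (rule tendsto_sandwich[OF _ _ tendsto_const lim])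
    show "\<forall>\<^sub>F n in sequentially. 0 \<le> \<beta> (d n) * d n"
      by (rule always_eventually) (metis nn dpos less_imp_le mult_nonneg_nonneg)
    show "\<forall>\<^sub>F n in sequentially. \<beta> (d n) * d n \<le> B * d n"
      using ev2 by eventually_elim (use dpos in \<open>auto intro: mult_right_mono less_imp_le\<close>)
  qed
qed

lemma periodic_fix:
  fixes X :: "nat \<Rightarrow> 'a::metric_space"
  assumes step: "\<And>k. X (Suc k) = T (X k)"
    and eq: "X n = X m" and nm: "n < m"
    and d0: "(\<lambda>k. dist (X (Suc k)) (X k)) \<longlonglongrightarrow> 0"
  shows "\<exists>x. T x = x"
proof -
  define p where "p = m - n"
  have pp: "p > 0" using nm by (simp add: p_def)
  have per: "X (n + k + p) = X (n + k)" for k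
  proof (induction k)
    case 0 then show ?case using eq nm by (simp add: p_def)
  next
    case (Suc k)
    have "X (n + Suc k + p) = T (X (n + k + p))" using step[of "n+k+p"] by simp
    also have "\<dots> = T (X (n + k))" using Suc by simp
    also have "\<dots> = X (n + Suc k)" using step[of "n+k"] by simp
    finally show ?case .
  qed
  have perj: "X (n + j * p + i) = X (n + i)" for j i
  proof (induction j)
    case 0 then show ?case by simp
  next
    case (Suc j)
    have "X (n + Suc j * p + i) = X (n + (j * p + i) + p)" by (simp add: algebra_simps)
    also have "\<dots> = X (n + (j*p + i))" by (rule per)
    also have "\<dots> = X (n + i)" using Suc by (simp add: add.assoc)
    finally show ?case .
  qed
  define D where "D = (\<lambda>k. dist (X (Suc k)) (X k))"
  have sm: "strict_mono (\<lambda>j. n + j * p)"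
    using pp by (auto simp: strict_mono_def)
  have "(\<lambda>j. D (n + j * p)) \<longlonglongrightarrow> 0"
    using LIMSEQ_subseq_LIMSEQ[OF d0[folded D_def] sm] by (simp add: o_def)
  moreover have "D (n + j * p) = D n" for j
    using perj[of j 1] perj[of j 0] by (simp add: D_def)
  ultimately have "(\<lambda>j. D n) \<longlonglongrightarrow> 0" by simp
  then have "D n = 0" by (simp add: LIMSEQ_const_iff)
  then have "T (X n) = X n" using step[of n] by (simp add: D_def)
  then show ?thesis by blast
qed

lemma no3:
  assumes "\<And>x y z. x \<in> S \<Longrightarrow> y \<in> S \<Longrightarrow> z \<in> S \<Longrightarrow> x \<noteq> y \<Longrightarrow> y \<noteq> z \<Longrightarrow> x \<noteq> z \<Longrightarrow> False"
  shows "finite S \<and> card S \<le> 2"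
proof (rule ccontr)
  assume "\<not> (finite S \<and> card S \<le> 2)"
  then obtain B where "B \<subseteq> S" "card B = 3"
  proof (cases "finite S")
    case True
    assume *: "\<And>B. B \<subseteq> S \<Longrightarrow> card B = 3 \<Longrightarrow> thesis" and "\<not> (finite S \<and> card S \<le> 2)"
    then have "3 \<le> card S" using True by simp
    then show thesis using * obtain_subset_with_card_n by metis
  next
    case False
    then show thesis using that infinite_arbitrarily_large[OF False, of 3] by blast
  qed
  then show False
  proof -
    assume B: "B \<subseteq> S" "card B = 3"
    then obtain x y z where "B = {x,y,z}" "x \<noteq> y" "y \<noteq> z" "x \<noteq> z"
      unfolding card_3_iff by blast
    then show False using assms[of x y z] B(1) by blast
  qed
qed

lemma key_arith:
  fixes D B C E P al dn dn1 dm c1 c2 c3 c1' c2' c3' c1'' c2'' c3'' hn hn1 hm :: real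
  assumes "B + C + E \<le> al * (D + P + dn) + c1 + c2 + c3"
    and "D \<le> dn + B + dm" and "D \<le> dn + dn1 + C + dm"
    and "al * (D + P + dn) \<le> al * (2 * D + 2 * dn)"
    and "al * (2 * D + 2 * dn) \<le> (1/2) * (2 * D + 2 * dn)"
    and "E \<ge> 0" "dn \<ge> 0" "dn1 \<ge> 0" "dm \<ge> 0"
    and "c1 \<ge> 0" "c2' \<ge> 0" "c3' \<ge> 0"
    and "c1' \<ge> 0" "c2 \<ge> 0" "c3'' \<ge> 0"
    and "c1'' \<ge> 0" "c2'' \<ge> 0" "c3 \<ge> 0"
    and "hn = dn + c1 + c2' + c3'" and "hm = dm + c1' + c2 + c3''" and "hn1 = dn1 + c1'' + c2'' + c3"
  shows "D \<le> 4 * (hn + hn1 + hm)"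
proof -
  have "al * (D + P + dn) \<le> (1/2) * (2 * D + 2 * dn)" using assms(4,5) by (rule order_trans)
  also have "(1/2) * (2 * D + 2 * dn) = D + dn" by simp
  finally have "B + C + E \<le> D + dn + c1 + c2 + c3" using assms(1) by linarith
  then have "D \<le> 3 * dn + 2 * dm + dn1 + c1 + c2 + c3" using assms(2,3,6) by linarith
  then have "D \<le> 4 * hn + 4 * hn1 + 4 * hm" using assms(7-) by linarith
  then show ?thesis by (simp add: distrib_left)
qed

theorem corollary4p7:
  fixes T :: "'a::complete_space \<Rightarrow> 'a"
    and \<alpha> :: real
    and \<beta>1 \<beta>2 \<beta>3 :: "real \<Rightarrow> real"
  assumes three: "\<exists>a b c :: 'a. a \<noteq> b \<and> b \<noteq> c \<and> a \<noteq> c"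
    and cont: "continuous_on UNIV T"
    and asreg: "asymptotically_regular T"
    and alpha: "0 \<le> \<alpha>" "\<alpha> < 1/2"
    and beta_nonneg: "\<And>t. t \<ge> 0 \<Longrightarrow> \<beta>1 t \<ge> 0 \<and> \<beta>2 t \<ge> 0 \<and> \<beta>3 t \<ge> 0"
    and lsup1: "Limsup (at_right 0) (\<lambda>t. ereal (\<beta>1 t)) < \<infinity>"
    and lsup2: "Limsup (at_right 0) (\<lambda>t. ereal (\<beta>2 t)) < \<infinity>"
    and lsup3: "Limsup (at_right 0) (\<lambda>t. ereal (\<beta>3 t)) < \<infinity>"
    and ineq: "\<And>x y z. x \<noteq> y \<Longrightarrow> y \<noteq> z \<Longrightarrow> x \<noteq> z \<Longrightarrow>
      dist (T x) (T y) + dist (T y) (T z) + dist (T x) (T z)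
        \<le> \<alpha> * (dist x y + dist y z + dist x z)
          + \<beta>1 (dist x (T x)) * dist x (T x)
          + \<beta>2 (dist y (T y)) * dist y (T y)
          + \<beta>3 (dist z (T z)) * dist z (T z)"
  shows "(\<exists>x. T x = x) \<and> finite {x. T x = x} \<and> card {x. T x = x} \<le> 2"
proof -
  have fin: "finite {x. T x = x} \<and> card {x. T x = x} \<le> 2"
  proof (rule no3)
    fix x y z assume "x \<in> {x. T x = x}" "y \<in> {x. T x = x}" "z \<in> {x. T x = x}"
      and d: "x \<noteq> y" "y \<noteq> z" "x \<noteq> z"
    then have fx: "T x = x" "T y = y" "T z = z" by auto
    have "dist x y + dist y z + dist x z \<le> \<alpha> * (dist x y + dist y z + dist x z)"
      using ineq[OF d] fx by simp
    moreover have "dist x y > 0" using d by simp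
    moreover have "dist y z \<ge> 0" "dist x z \<ge> 0" by auto
    ultimately have S: "dist x y + dist y z + dist x z > 0" by linarith
    have "\<alpha> * (dist x y + dist y z + dist x z) < 1 * (dist x y + dist y z + dist x z)"
      using alpha S by (intro mult_strict_right_mono) auto
    then show False using \<open>dist x y + dist y z + dist x z \<le> \<alpha> * _\<close> by simp
  qed
  define x0 :: 'a where "x0 = undefined"
  define X where "X = (\<lambda>k. (T ^^ k) x0)"
  have step: "X (Suc k) = T (X k)" for k by (simp add: X_def)
  have d0': "(\<lambda>k. dist (X (Suc k)) (X k)) \<longlonglongrightarrow> 0"
    using asreg unfolding asymptotically_regular_def X_def by blast
  have ex: "\<exists>x. T x = x"
  proof (cases "\<exists>n m. n < m \<and> X n = X m")
    case True
    then obtain n m where "n < m" "X n = X m" by blast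
    then show ?thesis using periodic_fix[OF step _ _ d0'] by blast
  next
    case False
    then have injX: "X n \<noteq> X m" if "n \<noteq> m" for n m
      using that by (metis linorder_neq_iff)
    define d where "d = (\<lambda>k. dist (X k) (T (X k)))"
    have dX: "d k = dist (X k) (X (Suc k))" for k by (simp add: d_def step)
    have deq: "d = (\<lambda>k. dist (X (Suc k)) (X k))" by (rule ext) (simp add: dX dist_commute)
    have d0: "d \<longlonglongrightarrow> 0" using d0' by (simp only: deq)
    have dpos: "d k > 0" for k using injX[of k "Suc k"] by (simp add: dX)
    define b1 where "b1 = (\<lambda>k. \<beta>1 (d k) * d k)"
    define b2 where "b2 = (\<lambda>k. \<beta>2 (d k) * d k)"
    define b3 where "b3 = (\<lambda>k. \<beta>3 (d k) * d k)"
    have bnn: "b1 k \<ge> 0" "b2 k \<ge> 0" "b3 k \<ge> 0" for k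
      using beta_nonneg[of "d k"] dpos[of k] by (auto simp: b1_def b2_def b3_def)
    have b1l: "b1 \<longlonglongrightarrow> 0" unfolding b1_def
      by (rule beta_lim[OF _ lsup1 d0 dpos]) (use beta_nonneg in auto)
    have b2l: "b2 \<longlonglongrightarrow> 0" unfolding b2_def
      by (rule beta_lim[OF _ lsup2 d0 dpos]) (use beta_nonneg in auto)
    have b3l: "b3 \<longlonglongrightarrow> 0" unfolding b3_def
      by (rule beta_lim[OF _ lsup3 d0 dpos]) (use beta_nonneg in auto)
    define h where "h = (\<lambda>k. d k + b1 k + b2 k + b3 k)"
    have hl: "h \<longlonglongrightarrow> 0" unfolding h_def
      using tendsto_add[OF tendsto_add[OF tendsto_add[OF d0 b1l] b2l] b3l] by simp
    have hd: "d k \<le> h k" for k using bnn[of k] by (simp add: h_def)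
    have hnn: "h k \<ge> 0" for k using hd[of k] dpos[of k] by simp
    have key: "dist (X n) (X m) \<le> 4 * (h n + h (Suc n) + h m)" if nm: "n + 2 \<le> m" for n m
    proof -
      define D where "D = dist (X n) (X m)"
      have i: "dist (T (X n)) (T (X m)) + dist (T (X m)) (T (X (Suc n))) + dist (T (X n)) (T (X (Suc n)))
        \<le> \<alpha> * (dist (X n) (X m) + dist (X m) (X (Suc n)) + dist (X n) (X (Suc n)))
          + b1 n + b2 m + b3 (Suc n)"
        using ineq[of "X n" "X m" "X (Suc n)"] injX[of n m] injX[of m "Suc n"] injX[of n "Suc n"] nm
        by (simp add: b1_def b2_def b3_def d_def)
      have t1: "D \<le> d n + dist (X (Suc n)) (X (Suc m)) + d m"
        unfolding D_def dX using dist_triangle[of "X n" "X m" "X (Suc m)"]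
          dist_triangle[of "X n" "X (Suc m)" "X (Suc n)"]
        by (simp add: dist_commute)
      have t2: "D \<le> d n + d (Suc n) + dist (X (Suc (Suc n))) (X (Suc m)) + d m"
        unfolding D_def dX using dist_triangle[of "X n" "X m" "X (Suc m)"]
          dist_triangle[of "X n" "X (Suc m)" "X (Suc n)"]
          dist_triangle[of "X (Suc n)" "X (Suc m)" "X (Suc (Suc n))"]
        by (simp add: dist_commute)
      have t3: "dist (X m) (X (Suc n)) \<le> D + d n"
        unfolding D_def dX using dist_triangle[of "X m" "X (Suc n)" "X n"] by (simp add: dist_commute)
      have a1: "\<alpha> * (dist (X n) (X m) + dist (X m) (X (Suc n)) + dist (X n) (X (Suc n)))
          \<le> \<alpha> * (2 * D + 2 * d n)"
        using t3 alpha(1) by (intro mult_left_mono) (auto simp: D_def dX)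
      have a2: "\<alpha> * (2 * D + 2 * d n) \<le> (1/2) * (2 * D + 2 * d n)"
        using alpha dpos[of n] by (intro mult_right_mono) (auto simp: D_def)
      have a3: "dist (X (Suc n)) (X (Suc (Suc n))) \<ge> 0" by simp
      have i': "dist (X (Suc n)) (X (Suc m)) + dist (X (Suc m)) (X (Suc (Suc n))) + dist (X (Suc n)) (X (Suc (Suc n)))
        \<le> \<alpha> * (dist (X n) (X m) + dist (X m) (X (Suc n)) + dist (X n) (X (Suc n)))
          + b1 n + b2 m + b3 (Suc n)"
        using i unfolding step[symmetric] .
      have t2': "D \<le> d n + d (Suc n) + dist (X (Suc m)) (X (Suc (Suc n))) + d m"
        using t2 by (simp only: dist_commute)
      show ?thesis
        unfolding D_def[symmetric]
        by (rule key_arith[OF i'[folded D_def] t1[unfolded dX] t2'[unfolded dX] a1[unfolded dX, folded D_def] a2[unfolded dX] a3 zero_le_dist zero_le_dist zero_le_dist bnn[of n] bnn[of m] bnn[of "Suc n"]])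
          (simp_all add: h_def dX)
    qed
    have "Cauchy X"
    proof (rule metric_CauchyI)
      fix e :: real assume e: "e > 0"
      have "eventually (\<lambda>k. h k < e / 12) sequentially"
        using order_tendstoD(2)[OF hl, of "e / 12"] e by simp
      then obtain M where M: "\<And>k. k \<ge> M \<Longrightarrow> h k < e / 12"
        by (auto simp: eventually_sequentially)
      have "dist (X m) (X n) < e" if "m \<ge> M" "n \<ge> M" for m n
      proof -
        have c: "dist (X n) (X m) < e" if "n \<ge> M" "m \<ge> M" "n \<le> m" for n m
        proof -
          consider "m = n" | "m = Suc n" | "n + 2 \<le> m" using \<open>n \<le> m\<close> by linarith
          then show ?thesis
          proof cases
            case 1 then show ?thesis using e by simp
          next
            case 2 then show ?thesis using hd[of n] M[of n] that e by (simp add: dX)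
          next
            case 3 then show ?thesis using key[OF 3] M[of n] M[of "Suc n"] M[of m] that by simp
          qed
        qed
        show ?thesis
          using c[of m n] c[of n m] that by (cases "m \<le> n") (auto simp: dist_commute)
      qed
      then show "\<exists>M. \<forall>m\<ge>M. \<forall>n\<ge>M. dist (X m) (X n) < e" by blast
    qed
    then obtain l where l: "X \<longlonglongrightarrow> l"
      using Cauchy_convergent_iff convergent_def by blast
    have "isCont T l" using cont by (simp add: continuous_on_eq_continuous_at)
    then have "(\<lambda>k. T (X k)) \<longlonglongrightarrow> T l" using l by (rule isCont_tendsto_compose)
    moreover have "(\<lambda>k. T (X k)) \<longlonglongrightarrow> l"
      using LIMSEQ_Suc[OF l] by (simp add: step)
    ultimately have "T l = l" by (rule LIMSEQ_unique)
    then show ?thesis by blast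
  qed
  show ?thesis using ex fin by blast
qed

end
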